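(* Let $a,b,c$ be non-constant polynomials in $\mathbb{F}_2[t]$ and let $\boldsymbol{\varepsilon}=a,(b,c)^\infty$, i.e. $\varepsilon_0=a$, $\varepsilon_{2m+1}=b$, $\varepsilon_{2m+2}=c$ for $m\geq 0$. Let $\beta=1/CF(\mathbf{s}(\boldsymbol{\varepsilon}))$. Then $$\beta^4=\frac{bc(b+c)}{a}+\frac{c^2}{a^2}+bc(b+c)\,\beta+bc\,\beta^2.$$
   Context: Given a sequence $\boldsymbol{\varepsilon}=(\varepsilon_n)_{n\geq 0}$, define words $W_0=$ empty word and $W_{n+1}=W_n\,\varepsilon_n\,W_n$ (concatenation) for $n\geq 0$; $\mathbf{s}(\boldsymbol{\varepsilon})=(s_i)_{i\geq 0}$ is the infinite word beginning with every $W_n$, i.e. $\varepsilon_0\varepsilon_1\varepsilon_0\varepsilon_2\varepsilon_0\varepsilon_1\varepsilon_0\varepsilon_3\cdots$. $CF(\mathbf{s}(\boldsymbol{\varepsilon}))=[s_0,s_1,\dots]=s_0+1/(s_1+1/(s_2+\cdots))$ is the infinite continued fraction in $\mathbb{F}_2((1/t))$ with these partial quotients. *)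

theory Defs
  imports "HOL-Computational_Algebra.Computational_Algebra" "HOL-Library.Z2"
begin

(* Laurent series field F_2((1/t)): elements of type "bit fls", where the formal
   variable X of fls plays the role of 1/t, so t = fls_X_inv. *)

definition tvar :: "bit fls" where
  "tvar = fls_X_inv"

definition emb :: "bit poly \<Rightarrow> bit fls" where
  "emb p = poly (map_poly fls_const p) tvar"

fun W :: "(nat \<Rightarrow> 'a) \<Rightarrow> nat \<Rightarrow> 'a list" where
  "W eps 0 = []"
| "W eps (Suc n) = W eps n @ [eps n] @ W eps n"

(* the infinite word s(eps) beginning with every W_n (length W_n = 2^n - 1) *)
definition sword :: "(nat \<Rightarrow> 'a) \<Rightarrow> nat \<Rightarrow> 'a" where
  "sword eps i = W eps (Suc i) ! i"

fun cf_fin :: "'a::field list \<Rightarrow> 'a" where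
  "cf_fin [] = 0"
| "cf_fin [x] = x"
| "cf_fin (x # y # ys) = x + inverse (cf_fin (y # ys))"

definition convergent_cf :: "(nat \<Rightarrow> bit fls) \<Rightarrow> nat \<Rightarrow> bit fls" where
  "convergent_cf s n = cf_fin (map s [0..<Suc n])"

(* infinite continued fraction: limit of convergents in the (1/t)-adic topology *)
definition CF :: "(nat \<Rightarrow> bit fls) \<Rightarrow> bit fls" where
  "CF s = lim (convergent_cf s)"

end

theory Submission
  imports Defs
begin

unbundle fps_syntax




definition small :: "int \<Rightarrow> 'a::field fls \<Rightarrow> bool" where
  "small K x \<longleftrightarrow> (\<forall>j<K. x $$ j = 0)"

lemma small_iff: "small K x \<longleftrightarrow> x = 0 \<or> K \<le> fls_subdegree x"
proof
  assume s: "small K x"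
  show "x = 0 \<or> K \<le> fls_subdegree x"
  proof (rule ccontr)
    assume "\<not> (x = 0 \<or> K \<le> fls_subdegree x)"
    hence "x \<noteq> 0" "fls_subdegree x < K" by auto
    with s show False unfolding small_def using nth_fls_subdegree_nonzero by blast
  qed
next
  assume "x = 0 \<or> K \<le> fls_subdegree x"
  thus "small K x" unfolding small_def by auto
qed

lemma small_zero [simp]: "small K 0" by (simp add: small_def)

lemma small_add: "small K x \<Longrightarrow> small K y \<Longrightarrow> small K (x + y)"
  by (simp add: small_def)
lemma small_diff: "small K x \<Longrightarrow> small K y \<Longrightarrow> small K (x - y)"
  by (simp add: small_def)
lemma small_mono: "K' \<le> K \<Longrightarrow> small K x \<Longrightarrow> small K' x"
  by (simp add: small_def)
lemma small_sd: "small (fls_subdegree x) x"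
  by (simp add: small_def)
lemma small_mult: "small K x \<Longrightarrow> small L y \<Longrightarrow> small (K + L) (x * y)"
  unfolding small_iff by (cases "x = 0"; cases "y = 0") auto
lemma small_all: "(\<And>K. small K x) \<Longrightarrow> x = 0"
  using small_iff[of "fls_subdegree x + 1" x] by auto
lemma small_inverse: "small (- fls_subdegree x) (inverse x)"
  by (metis fls_inverse_subdegree small_sd)
lemma small_approx:
  assumes "small K (x - y)" "x \<noteq> 0" "fls_subdegree x < K"
  shows "y \<noteq> 0 \<and> fls_subdegree y = fls_subdegree x"
proof -
  have eq: "\<And>j. j < K \<Longrightarrow> y $$ j = x $$ j" using assms(1) by (simp add: small_def)
  have "y $$ fls_subdegree x \<noteq> 0" using eq[OF assms(3)] assms(2) by simp
  hence "y \<noteq> 0" by auto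
  moreover have "fls_subdegree y = fls_subdegree x"
    apply (rule fls_subdegree_eqI)
    using eq[OF assms(3)] assms(2) apply simp
    using eq assms(3) by (metis fls_eq0_below_subdegree order.strict_trans)
  ultimately show ?thesis by simp
qed

lemma two_bit_fls: "(2::bit fls) = 0"
proof -
  have "(2::bit fls) = fls_const 1 + fls_const 1" by simp
  also have "\<dots> = fls_const (1 + 1)" by (simp only: fls_plus_const)
  finally show ?thesis by simp
qed

lemma tendsto_small:
  fixes f :: "nat \<Rightarrow> 'a::field fls"
  assumes "\<And>K. \<exists>N. \<forall>m\<ge>N. small K (f m - L)"
  shows "f \<longlonglongrightarrow> L"
proof (rule metric_LIMSEQ_I)
  fix r :: real assume r: "0 < r"
  obtain k :: nat where k: "(1/2::real) ^ k < r" using real_arch_pow_inv[OF r, of "1/2"] by auto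
  obtain N where N: "\<forall>m\<ge>N. small (int k) (f m - L)" using assms by blast
  have "dist (f m) L < r" if "m \<ge> N" for m
  proof (cases "f m = L")
    case True thus ?thesis using r by simp
  next
    case False
    hence ne: "f m - L \<noteq> 0" by simp
    hence ge: "int k \<le> fls_subdegree (f m - L)" using N that small_iff by blast
    hence "dist (f m) L = inverse (2 ^ nat (fls_subdegree (f m - L)))"
      using False by (simp add: dist_fls_def)
    also have "\<dots> \<le> inverse (2 ^ k)"
      using ge by (intro le_imp_inverse_le) (auto intro: power_increasing)
    also have "\<dots> = (1/2) ^ k" by (simp add: power_one_over inverse_eq_divide)
    finally show ?thesis using k by simp
  qed
  thus "\<exists>no. \<forall>n\<ge>no. dist (f n) L < r" by blast
qed





lemma emb_pCons: "emb (pCons c p) = fls_const c + tvar * emb p"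
  unfolding emb_def by (simp add: map_poly_pCons)

lemma emb_nth: "emb p $$ j = (if j \<le> 0 then coeff p (nat (-j)) else 0)"
proof (induction p arbitrary: j)
  case 0 thus ?case by (simp add: emb_def)
next
  case (pCons c p)
  have "emb (pCons c p) $$ j = (if j = 0 then c else 0) + emb p $$ (j + 1)"
    by (simp add: emb_pCons tvar_def fls_X_inv_times_conv_shift)
  also have "\<dots> = (if j \<le> 0 then coeff (pCons c p) (nat (-j)) else 0)"
    using pCons.IH[of "j+1"] by (auto simp: coeff_pCons split: nat.splits) (simp_all add: nat_diff_distrib')
  finally show ?case .
qed

lemma emb_add: "emb (p + q) = emb p + emb q"
  by (rule fls_eqI) (simp add: emb_nth)

lemma emb_smult: "emb (smult c q) = fls_const c * emb q"
  by (rule fls_eqI) (simp add: emb_nth)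

lemma emb_mult: "emb (p * q) = emb p * emb q"
proof (induction p)
  case 0 thus ?case by (simp add: emb_def)
next
  case (pCons c p)
  have "pCons c p * q = smult c q + pCons 0 (p * q)" by simp
  hence "emb (pCons c p * q) = fls_const c * emb q + tvar * (emb p * emb q)"
    by (simp add: emb_add emb_smult emb_pCons pCons.IH)
  thus ?case by (simp add: emb_pCons algebra_simps)
qed

lemma emb_one: "emb 1 = 1"
  by (simp add: emb_def)

lemma emb_power: "emb (p ^ n) = emb p ^ n"
  by (induction n) (simp_all add: emb_one emb_mult)

lemma emb_sd:
  assumes "p \<noteq> 0"
  shows "emb p \<noteq> 0 \<and> fls_subdegree (emb p) = - int (degree p)"
proof -
  have nz: "emb p $$ (- int (degree p)) \<noteq> 0" using assms by (simp add: emb_nth)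
  have "fls_subdegree (emb p) = - int (degree p)"
    apply (rule fls_subdegree_eqI[OF nz])
    by (simp add: emb_nth coeff_eq_0)
  with nz show ?thesis by auto
qed





lemma small_uminus: "small K x \<Longrightarrow> small K (- x)"
  by (simp add: small_def)

definition big :: "'a::field fls \<Rightarrow> bool" where
  "big x \<longleftrightarrow> x \<noteq> 0 \<and> fls_subdegree x \<le> -1"

lemma big_inverse_small: "big c \<Longrightarrow> small 1 (inverse c)"
  unfolding big_def by (rule small_mono[OF _ small_inverse]) simp

lemma cf_big:
  "l \<noteq> [] \<Longrightarrow> (\<forall>x\<in>set l. big x) \<Longrightarrow> cf_fin l \<noteq> 0 \<and> fls_subdegree (cf_fin l) = fls_subdegree (hd l)"
proof (induction l rule: cf_fin.induct)
  case 1 thus ?case by simp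
next
  case (2 x) thus ?case by (simp add: big_def)
next
  case (3 x y ys)
  define c where "c = cf_fin (y # ys)"
  have bc: "big c" using 3 unfolding c_def big_def by auto
  have "small 0 (x - (x + inverse c))"
    using small_uminus[OF small_mono[OF _ big_inverse_small[OF bc]], of 0] by simp
  moreover have "x \<noteq> 0" "fls_subdegree x < 0" using 3(3) by (auto simp: big_def)
  ultimately have "x + inverse c \<noteq> 0 \<and> fls_subdegree (x + inverse c) = fls_subdegree x"
    using small_approx by blast
  thus ?case by (simp add: c_def)
qed

lemma cf_big': "l \<noteq> [] \<Longrightarrow> (\<forall>x\<in>set l. big x) \<Longrightarrow> big (cf_fin l)"
  using cf_big[of l] by (cases l) (auto simp: big_def)

lemma inverse_diff_small:
  assumes "big c1" "big c2" "small K (c1 - c2)"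
  shows "small (K + 2) (inverse c1 - inverse c2)"
proof -
  have ne: "c1 \<noteq> 0" "c2 \<noteq> 0" using assms by (auto simp: big_def)
  have "inverse c1 - inverse c2 = (c2 - c1) * (inverse c1 * inverse c2)"
    using ne by (simp add: field_simps)
  moreover have "small (K + (1 + 1)) ((c2 - c1) * (inverse c1 * inverse c2))"
    apply (rule small_mult)
     apply (metis assms(3) minus_diff_eq small_uminus)
    by (rule small_mult[OF big_inverse_small big_inverse_small]; fact)
  ultimately show ?thesis by simp
qed

lemma cf_cons2: "l \<noteq> [] \<Longrightarrow> cf_fin (x # l) = x + inverse (cf_fin l)"
  by (cases l) auto

lemma cf_prefix:
  assumes "pre \<noteq> []" "\<forall>x\<in>set (pre @ r1 @ r2). big x"
  shows "small (2 * int (length pre) - 1) (cf_fin (pre @ r1) - cf_fin (pre @ r2))"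
  using assms
proof (induction pre rule: list_nonempty_induct)
  case (single x)
  have gen: "small 1 (cf_fin ([x] @ r) - x)" if "\<forall>y\<in>set r. big y" for r
  proof (cases "r = []")
    case True thus ?thesis by simp
  next
    case False
    hence "cf_fin ([x] @ r) - x = inverse (cf_fin r)" by (simp add: cf_cons2)
    thus ?thesis using big_inverse_small[OF cf_big'[OF False that]] by simp
  qed
  have "small 1 ((cf_fin ([x] @ r1) - x) - (cf_fin ([x] @ r2) - x))"
    apply (rule small_diff; rule gen) using single by auto
  thus ?case by simp
next
  case (cons x xs)
  have ne1: "xs @ r1 \<noteq> []" and ne2: "xs @ r2 \<noteq> []" using cons by auto
  have b1: "big (cf_fin (xs @ r1))" using cons.prems by (intro cf_big'[OF ne1]) auto
  have b2: "big (cf_fin (xs @ r2))" using cons.prems by (intro cf_big'[OF ne2]) auto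
  have "small (2 * int (length xs) - 1 + 2)
      (inverse (cf_fin (xs @ r1)) - inverse (cf_fin (xs @ r2)))"
    using inverse_diff_small[OF b1 b2 cons.IH] cons.prems by auto
  thus ?case using ne1 ne2 by (simp add: cf_cons2 algebra_simps)
qed

type_synonym m4 = "bit fls \<times> bit fls \<times> bit fls \<times> bit fls"

fun mmul :: "m4 \<Rightarrow> m4 \<Rightarrow> m4" where
  "mmul (a,b,c,d) (e,f,g,h) = (a*e+b*g, a*f+b*h, c*e+d*g, c*f+d*h)"

fun mm :: "bit fls list \<Rightarrow> m4" where
  "mm [] = (1,0,0,1)"
| "mm (x # l) = mmul (x,1,1,0) (mm l)"

lemma mmul_assoc: "mmul (mmul A B) C = mmul A (mmul B C)"
  by (cases A; cases B; cases C) (simp add: algebra_simps)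

lemma mmul_one: "mmul (1,0,0,1) A = A"
  by (cases A) simp

lemma mm_append: "mm (l1 @ l2) = mmul (mm l1) (mm l2)"
  by (induction l1) (simp_all add: mmul_one mmul_assoc)

lemma cf_mm:
  "l \<noteq> [] \<Longrightarrow> (\<forall>x\<in>set l. big x) \<Longrightarrow> cf_fin l = fst (mm l) / fst (snd (snd (mm l)))"
proof (induction l rule: cf_fin.induct)
  case 1 thus ?case by simp
next
  case (2 x) thus ?case by simp
next
  case (3 x y ys)
  obtain A B C D where m: "mm (y # ys) = (A, B, C, D)" by (cases "mm (y # ys)") auto
  have IH: "cf_fin (y # ys) = A / C" using 3 m by simp
  have "cf_fin (y # ys) \<noteq> 0" using cf_big[of "y # ys"] 3(3) by simp
  hence "A \<noteq> 0" using IH by auto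
  have "mm (x # y # ys) = (x*A + C, x*B + D, A, B)"
    by (simp only: mm.simps(2) m[simplified]) simp
  thus ?case using IH \<open>A \<noteq> 0\<close> by (simp add: field_simps)
qed





lemma length_W: "length (W eps n) = 2 ^ n - 1"
proof (induction n)
  case 0 thus ?case by simp
next
  case (Suc n)
  have "(1::nat) \<le> 2 ^ n" by simp
  thus ?case using Suc by simp
qed

lemma W_prefix: "n \<le> m \<Longrightarrow> \<exists>t. W eps m = W eps n @ t"
proof (induction m rule: dec_induct)
  case base thus ?case by simp
next
  case (step m)
  then obtain t where "W eps m = W eps n @ t" by blast
  thus ?case by simp
qed

lemma i_lt_len: "i < length (W eps (Suc i))"
proof -
  have "Suc i < 2 ^ Suc i" by (rule less_exp)
  hence "i < 2 ^ Suc i - 1" by arith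
  thus ?thesis by (simp only: length_W)
qed

lemma sword_W:
  assumes "i < length (W eps n)"
  shows "sword eps i = W eps n ! i"
proof -
  note i2 = i_lt_len[of i eps]
  define M where "M = max n (Suc i)"
  obtain t1 where t1: "W eps M = W eps n @ t1" using W_prefix[of n M] M_def by auto
  obtain t2 where t2: "W eps M = W eps (Suc i) @ t2" using W_prefix[of "Suc i" M] M_def by auto
  have "W eps M ! i = W eps n ! i" using t1 assms by (metis nth_append)
  moreover have "W eps M ! i = W eps (Suc i) ! i" using t2 i2 by (metis nth_append)
  ultimately show ?thesis by (simp only: sword_def)
qed

lemma set_W: "set (W eps n) \<subseteq> range eps"
  by (induction n) auto

lemma sword_in: "sword eps i \<in> range eps"
proof -
  have "W eps (Suc i) ! i \<in> set (W eps (Suc i))" by (rule nth_mem[OF i_lt_len])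
  moreover have "set (W eps (Suc i)) \<subseteq> range eps" by (rule set_W)
  ultimately have "W eps (Suc i) ! i \<in> range eps" by (rule subsetD[rotated])
  thus ?thesis by (simp only: sword_def)
qed

lemma big_emb: "degree p \<ge> 1 \<Longrightarrow> big (emb p)"
proof -
  assume d: "degree p \<ge> 1"
  hence "p \<noteq> 0" by auto
  hence e: "emb p \<noteq> 0" "fls_subdegree (emb p) = - int (degree p)" using emb_sd[of p] by auto
  have "fls_subdegree (emb p) \<le> -1" using d unfolding e(2) by linarith
  thus ?thesis using e(1) unfolding big_def by blast
qed





lemma small_diff_nth: "small K (x - y) \<Longrightarrow> j < K \<Longrightarrow> x $$ j = y $$ j"
  by (simp add: small_def)

lemma conv_cauchy:
  assumes "\<forall>i. big (s i)" "m \<le> m'"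
  shows "small (2 * int m + 1) (convergent_cf s m - convergent_cf s m')"
proof -
  have sm: "Suc m + (m' - m) = Suc m'" using assms(2) by simp
  have "[0..<Suc m'] = [0..<Suc m] @ [Suc m..<Suc m']"
    using upt_add_eq_append[of 0 "Suc m" "m' - m"] unfolding sm by simp
  hence e: "map s [0..<Suc m'] = map s [0..<Suc m] @ map s [Suc m..<Suc m']" by (simp only: map_append)
  have "small (2 * int (length (map s [0..<Suc m])) - 1)
     (cf_fin (map s [0..<Suc m] @ []) - cf_fin (map s [0..<Suc m] @ map s [Suc m..<Suc m']))"
    by (rule cf_prefix) (use assms(1) in \<open>auto simp del: upt_Suc\<close>)
  moreover have "2 * int (length (map s [0..<Suc m])) - 1 = 2 * int m + 1" by (simp del: upt_Suc)
  ultimately show ?thesis unfolding convergent_cf_def e by (simp only: append_Nil2)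
qed

lemma cf_limit:
  assumes big: "\<forall>i. big (s i)"
  shows "\<exists>L. convergent_cf s \<longlonglongrightarrow> L \<and> (\<forall>m. small (2 * int m + 1) (convergent_cf s m - L))"
proof -
  define x where "x = convergent_cf s"
  define f where "f = (\<lambda>j::int. x (nat j) $$ j)"
  obtain N where N: "\<forall>n<N. x 0 $$ n = 0" using fls_nth_vanishes_belowE by blast
  have "\<forall>n<min N 0. f n = 0" using N by (simp add: f_def)
  hence Lnth: "Abs_fls f $$ j = f j" for j by (intro nth_Abs_fls_lower_bound) 
  define L where "L = Abs_fls f"
  have key: "x m $$ j = x (nat j) $$ j" if "j < 2 * int m + 1" for m j
  proof -
    define M where "M = max m (nat j)"
    have "small (2 * int m + 1) (x m - x M)" unfolding x_def
      by (rule conv_cauchy[OF big]) (simp add: M_def)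
    hence 1: "x m $$ j = x M $$ j" using that by (rule small_diff_nth)
    have "small (2 * int (nat j) + 1) (x (nat j) - x M)" unfolding x_def
      by (rule conv_cauchy[OF big]) (simp add: M_def)
    moreover have "j < 2 * int (nat j) + 1" by simp
    ultimately have 2: "x (nat j) $$ j = x M $$ j" by (rule small_diff_nth)
    show ?thesis using 1 2 by simp
  qed
  have sm: "small (2 * int m + 1) (x m - L)" for m
    unfolding small_def
  proof (intro allI impI)
    fix j assume j: "j < 2 * int m + 1"
    have "L $$ j = x (nat j) $$ j" by (simp only: L_def Lnth, simp only: f_def)
    thus "(x m - L) $$ j = 0" using key[OF j] by simp
  qed
  have "x \<longlonglongrightarrow> L"
  proof (rule tendsto_small)
    fix K
    show "\<exists>N. \<forall>m\<ge>N. small K (x m - L)"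
      by (rule exI[of _ "nat K"], intro allI impI, rule small_mono[OF _ sm]) simp
  qed
  hence "convergent_cf s \<longlonglongrightarrow> L" by (simp only: x_def)
  moreover have "\<forall>m. small (2 * int m + 1) (convergent_cf s m - L)" using sm by (simp only: x_def) simp
  ultimately show ?thesis by blast
qed





lemma char2_eq:
  fixes x y z :: "bit fls"
  assumes "x = y + 2 * z" shows "x = y"
  using assms by (simp only: two_bit_fls mult_zero_left add_0_right)

lemma step_alg:
  fixes p q r e :: "bit fls"
  assumes "p * r + q ^ 2 = 1"
  shows "mmul (p,q,q,r) (mmul (e,1,1,0) (p,q,q,r)) = (e*p^2, e*p*q+1, e*p*q+1, e*q^2)"
    and "(e*p^2)*(e*q^2) + (e*p*q+1)^2 = 1"
proof -
  have 1: "p * (e * p + q) + q * p = e*p^2"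
    by (rule char2_eq[of _ _ "p*q"]) algebra
  have 2: "p * (e * q + r) + q * q = e*p*q+1"
    using assms by algebra
  have 3: "q * (e * p + q) + r * p = e*p*q+1"
    using assms by algebra
  have 4: "q * (e * q + r) + r * q = e*q^2"
    by (rule char2_eq[of _ _ "q*r"]) algebra
  show "mmul (p,q,q,r) (mmul (e,1,1,0) (p,q,q,r)) = (e*p^2, e*p*q+1, e*p*q+1, e*q^2)"
    unfolding mmul.simps
    by (simp only: mult_1_left mult_1_right mult_zero_left mult_zero_right add_0_right add_0_left 1 2 3 4)
  have "(e*p^2)*(e*q^2) + (e*p*q+1)^2 = 1 + 2 * (e*e*p*p*q*q + e*p*q)"
    by algebra
  thus "(e*p^2)*(e*q^2) + (e*p*q+1)^2 = 1" by (simp only: two_bit_fls mult_zero_left add_0_right)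
qed

fun PQR :: "(nat \<Rightarrow> bit poly) \<Rightarrow> nat \<Rightarrow> bit fls \<times> bit fls \<times> bit fls" where
  "PQR eps 0 = (1, 0, 1)"
| "PQR eps (Suc n) = (case PQR eps n of (p, q, r) \<Rightarrow>
      (emb (eps n) * p^2, emb (eps n) * p * q + 1, emb (eps n) * q^2))"

definition pp where "pp eps n = fst (PQR eps n)"
definition qq where "qq eps n = fst (snd (PQR eps n))"
definition rr where "rr eps n = snd (snd (PQR eps n))"

lemma PQR_eq: "PQR eps n = (pp eps n, qq eps n, rr eps n)"
  by (simp add: pp_def qq_def rr_def)

lemma pp_Suc: "pp eps (Suc n) = emb (eps n) * pp eps n ^ 2"
  by (simp add: pp_def qq_def split: prod.splits)
lemma qq_Suc: "qq eps (Suc n) = emb (eps n) * pp eps n * qq eps n + 1"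
  by (simp add: pp_def qq_def split: prod.splits)
lemma rr_Suc: "rr eps (Suc n) = emb (eps n) * qq eps n ^ 2"
  by (simp add: rr_def qq_def split: prod.splits)
lemma pqr_0: "pp eps 0 = 1" "qq eps 0 = 0" "rr eps 0 = 1"
  by (simp_all add: pp_def qq_def rr_def)

lemma mm_W:
  "mm (map emb (W eps n)) = (pp eps n, qq eps n, qq eps n, rr eps n)
   \<and> pp eps n * rr eps n + qq eps n ^ 2 = 1"
proof (induction n)
  case 0 thus ?case by (simp add: pqr_0)
next
  case (Suc n)
  have "mm (map emb (W eps (Suc n))) =
      mmul (mm (map emb (W eps n))) (mmul (emb (eps n),1,1,0) (mm (map emb (W eps n))))"
    by (simp add: mm_append)
  also have "\<dots> = (pp eps (Suc n), qq eps (Suc n), qq eps (Suc n), rr eps (Suc n))"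
    unfolding Suc.IH[THEN conjunct1] pp_Suc qq_Suc rr_Suc
    by (rule step_alg(1)) (rule Suc.IH[THEN conjunct2])
  moreover have "pp eps (Suc n) * rr eps (Suc n) + qq eps (Suc n) ^ 2 = 1"
    unfolding pp_Suc qq_Suc rr_Suc
    by (rule step_alg(2)) (rule Suc.IH[THEN conjunct2])
  ultimately show ?case by simp
qed






lemma pp_big:
  assumes "\<forall>k. big (emb (eps k))"
  shows "pp eps n \<noteq> 0 \<and> fls_subdegree (pp eps n) \<le> - int n"
proof (induction n)
  case 0 thus ?case by (simp add: pqr_0)
next
  case (Suc n)
  have e: "emb (eps n) \<noteq> 0" "fls_subdegree (emb (eps n)) \<le> -1"
    using assms by (auto simp: big_def)
  have "pp eps (Suc n) = emb (eps n) * (pp eps n * pp eps n)"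
    by (simp add: pp_Suc power2_eq_square)
  moreover have "pp eps n * pp eps n \<noteq> 0" using Suc by simp
  ultimately have "pp eps (Suc n) \<noteq> 0 \<and> fls_subdegree (pp eps (Suc n)) =
      fls_subdegree (emb (eps n)) + (fls_subdegree (pp eps n) + fls_subdegree (pp eps n))"
    using e Suc by simp
  thus ?case using e Suc by linarith
qed

lemma u_Suc:
  assumes "\<forall>k. big (emb (eps k))"
  shows "qq eps (Suc n) / pp eps (Suc n) = qq eps n / pp eps n + inverse (pp eps (Suc n))"
proof -
  have e: "emb (eps n) \<noteq> 0" using assms by (auto simp: big_def)
  have p: "pp eps n \<noteq> 0" using pp_big[OF assms] by blast
  show ?thesis unfolding pp_Suc qq_Suc using e p
    by (simp add: field_simps power2_eq_square)
qed

definition Osum where "Osum eps m = (\<Sum>j<m. inverse (pp eps (2*j+1)))"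
definition Esum where "Esum eps m = (\<Sum>j<m. inverse (pp eps (2*j+2)))"

lemma u_even:
  assumes "\<forall>k. big (emb (eps k))"
  shows "qq eps (2*m) / pp eps (2*m) = Osum eps m + Esum eps m"
proof (induction m)
  case 0 thus ?case by (simp add: pqr_0 Osum_def Esum_def)
next
  case (Suc m)
  have "qq eps (2*Suc m) / pp eps (2*Suc m) = qq eps (Suc (Suc (2*m))) / pp eps (Suc (Suc (2*m)))"
    by simp
  also have "\<dots> = qq eps (2*m) / pp eps (2*m) + inverse (pp eps (2*m+1)) + inverse (pp eps (2*m+2))"
    using u_Suc[OF assms, of "Suc (2*m)"] u_Suc[OF assms, of "2*m"] by simp
  also have "\<dots> = Osum eps (Suc m) + Esum eps (Suc m)"
    using Suc by (simp add: Osum_def Esum_def algebra_simps)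
  finally show ?case .
qed

lemma pp_step: "pp eps (Suc n) = emb (eps n) * pp eps n ^ 2" by (rule pp_Suc)

lemma E_rel:
  assumes big: "\<forall>k. big (emb (eps k))" and hb: "\<And>m. eps (2 * m + 1) = b"
  shows "Esum eps m * emb b = Osum eps m ^ 2"
proof (induction m)
  case 0 thus ?case by (simp add: Osum_def Esum_def)
next
  case (Suc m)
  define X where "X = pp eps (2*m+1)"
  define Oo where "Oo = Osum eps m"
  define E where "E = Esum eps m"
  have bnz: "emb b \<noteq> 0" using big hb[of 0] by (metis big_def)
  have Xnz: "X \<noteq> 0" using pp_big[OF big, where n="2*m+1"] by (simp add: X_def)
  have P2: "pp eps (2*m+2) = emb b * X ^ 2"
    using pp_step[of eps "2*m+1"] hb[of m] X_def by simp
  have Os: "Osum eps (Suc m) = Oo + inverse X" by (simp add: Osum_def Oo_def X_def)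
  have Es: "Esum eps (Suc m) = E + inverse (emb b * X ^ 2)"
    using P2 by (simp add: Esum_def E_def)
  have "Esum eps (Suc m) * emb b = E * emb b + inverse X ^ 2"
    unfolding Es using bnz Xnz by (simp add: field_simps)
  also have "\<dots> = Oo ^ 2 + inverse X ^ 2" using Suc by (simp add: Oo_def E_def)
  finally have 1: "Esum eps (Suc m) * emb b = Oo ^ 2 + inverse X ^ 2" .
  have "Osum eps (Suc m) ^ 2 = Oo ^ 2 + inverse X ^ 2 + 2 * (Oo * inverse X)"
    unfolding Os by algebra
  hence "Osum eps (Suc m) ^ 2 = Oo ^ 2 + inverse X ^ 2" by (rule char2_eq)
  with 1 show ?case by simp
qed

lemma O_rel:
  assumes big: "\<forall>k. big (emb (eps k))" and ha: "eps 0 = a"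
    and hb: "\<And>m. eps (2 * m + 1) = b" and hc: "\<And>m. eps (2 * m + 2) = c"
  shows "Osum eps (Suc k) = inverse (emb a) + Esum eps (Suc k) ^ 2 * inverse (emb c)
           + inverse (pp eps (2*k+3))"
proof (induction k)
  case 0
  have cnz: "emb c \<noteq> 0" using big hc[of 0] by (metis big_def)
  have P1: "pp eps 1 = emb a"
  proof -
    have "pp eps (Suc 0) = emb (eps 0) * pp eps 0 ^ 2" by (rule pp_step)
    also have "\<dots> = emb a" by (simp add: ha pqr_0)
    finally show ?thesis by simp
  qed
  have P3: "pp eps 3 = emb c * pp eps 2 ^ 2"
    using pp_step[of eps 2] hc[of 0] by (simp add: numeral_eq_Suc)
  have P1': "pp eps (Suc 0) = emb a" using P1 by simp
  have O1: "Osum eps 1 = inverse (emb a)" by (simp add: Osum_def P1 P1')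
  have E1: "Esum eps 1 = inverse (pp eps 2)" by (simp add: Esum_def numeral_2_eq_2)
  have I3: "inverse (pp eps 3) = inverse (emb c) * inverse (pp eps 2) ^ 2"
    by (simp add: P3 power_inverse)
  have "inverse (emb a) + Esum eps 1 ^ 2 * inverse (emb c) + inverse (pp eps 3)
      = inverse (emb a) + 2 * (Esum eps 1 ^ 2 * inverse (emb c))"
    unfolding I3 E1 by algebra
  hence "inverse (emb a) + Esum eps 1 ^ 2 * inverse (emb c) + inverse (pp eps 3) = inverse (emb a)"
    by (rule char2_eq)
  thus ?case using O1 by simp
next
  case (Suc k)
  define Y where "Y = pp eps (2*k+4)"
  define E where "E = Esum eps (Suc k)"
  define ia where "ia = inverse (emb a)"
  define ic where "ic = inverse (emb c)"
  have P5: "pp eps (2*k+5) = emb c * Y ^ 2"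
  proof -
    have ix: "2 * Suc k + 2 = 2*k+4" by simp
    have "eps (2*k+4) = c" using hc[of "Suc k"] unfolding ix .
    thus ?thesis using pp_step[of eps "2*k+4"] Y_def by (simp add: algebra_simps)
  qed
  have I5: "inverse (pp eps (2*k+5)) = ic * inverse Y ^ 2"
    by (simp add: P5 power_inverse ic_def)
  have Os: "Osum eps (Suc (Suc k)) = Osum eps (Suc k) + inverse (pp eps (2*k+3))"
  proof -
    have "2 * Suc k + 1 = 2*k+3" by simp
    thus ?thesis by (simp only: Osum_def sum.lessThan_Suc)
  qed
  have Es: "Esum eps (Suc (Suc k)) = E + inverse Y"
  proof -
    have "2 * Suc k + 2 = 2*k+4" by simp
    thus ?thesis by (simp only: Esum_def E_def Y_def sum.lessThan_Suc)
  qed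
  have "Osum eps (Suc (Suc k)) = ia + E ^ 2 * ic + 2 * inverse (pp eps (2*k+3))"
    unfolding Os Suc.IH E_def ia_def ic_def by algebra
  hence 1: "Osum eps (Suc (Suc k)) = ia + E ^ 2 * ic" by (rule char2_eq)
  have "ia + Esum eps (Suc (Suc k)) ^ 2 * ic + inverse (pp eps (2*(Suc k)+3))
      = ia + E ^ 2 * ic + 2 * (ic * inverse Y ^ 2 + ic * E * inverse Y)"
  proof -
    have idx: "2*(Suc k)+3 = 2*k+5" by simp
    show ?thesis unfolding Es idx I5 by algebra
  qed
  hence 2: "ia + Esum eps (Suc (Suc k)) ^ 2 * ic + inverse (pp eps (2*(Suc k)+3)) = ia + E ^ 2 * ic"
    by (rule char2_eq)
  show ?case using 1 2 by (simp add: ia_def ic_def)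
qed





lemma final_alg:
  fixes Oo E d ia ic b c :: "bit fls"
  assumes hc: "c * ic = 1" and hb: "E * b = Oo^2" and hO: "Oo = ia + E^2*ic + d"
  shows "(Oo+E)^4 - (b*c*(b+c)*ia + c^2*ia^2 + b*c*(b+c)*(Oo+E) + b*c*(Oo+E)^2)
         = b*c*(b+c)*d + c^2*d^2"
proof -
  have "E^2 = c*(Oo+ia+d) + 2*(-(c*(ia+d)))" using hc hO by algebra
  hence F3: "E^2 = c*(Oo+ia+d)" by (rule char2_eq)
  have "(Oo+E)^4 = Oo^4 + E^4 + 2*(2*Oo^3*E + 3*Oo^2*E^2 + 2*Oo*E^3)" by algebra
  hence F1: "(Oo+E)^4 = Oo^4 + E^4" by (rule char2_eq)
  have F2: "Oo^4 = b^2 * E^2" using hb by algebra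
  have "E^4 = c^2*(Oo^2+ia^2+d^2) + 2*(c^2*(Oo*ia+Oo*d+ia*d))" using F3 by algebra
  hence F4: "E^4 = c^2*(Oo^2+ia^2+d^2)" by (rule char2_eq)
  have "(Oo+E)^4 = (b*c*(b+c)*ia + c^2*ia^2 + b*c*(b+c)*(Oo+E) + b*c*(Oo+E)^2)
      + (b*c*(b+c)*d + c^2*d^2)
      + 2 * (-(b*c^2*ia + b*c^2*Oo + b*c*Oo^2 + b*c*Oo*E + b*c^2*d))"
    using F1 F2 F3 F4 hb by algebra
  hence "(Oo+E)^4 = (b*c*(b+c)*ia + c^2*ia^2 + b*c*(b+c)*(Oo+E) + b*c*(Oo+E)^2)
      + (b*c*(b+c)*d + c^2*d^2)" by (rule char2_eq)
  thus ?thesis by (simp add: algebra_simps)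
qed


lemma Dshift:
  fixes u d C1 B c2 ia :: "bit fls"
  shows "(u+d)^4 - (C1*ia + c2*ia^2 + C1*(u+d) + B*(u+d)^2)
       = (u^4 - (C1*ia + c2*ia^2 + C1*u + B*u^2)) + d^4 - C1*d - B*d^2"
proof -
  have "(u+d)^4 - (C1*ia + c2*ia^2 + C1*(u+d) + B*(u+d)^2)
       = (u^4 - (C1*ia + c2*ia^2 + C1*u + B*u^2)) + d^4 - C1*d - B*d^2
         + 2*(2*u^3*d + 3*u^2*d^2 + 2*u*d^3 - B*u*d)" by algebra
  thus ?thesis by (rule char2_eq)
qed

lemma eps_cases:
  fixes eps :: "nat \<Rightarrow> 'a"
  assumes "eps 0 = a" "\<And>m. eps (2 * m + 1) = b" "\<And>m. eps (2 * m + 2) = c"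
  shows "eps k = a \<or> eps k = b \<or> eps k = c"
proof (cases "k = 0")
  case True thus ?thesis using assms by simp
next
  case False
  show ?thesis
  proof (cases "odd k")
    case True
    then obtain m where "k = 2*m+1" by (metis oddE)
    thus ?thesis using assms by simp
  next
    case False
    then obtain j where j: "k = 2*j" by (metis evenE)
    with \<open>k \<noteq> 0\<close> have "k = 2*(j-1)+2" by simp
    thus ?thesis using assms by metis
  qed
qed

lemma big_convergent:
  assumes "\<forall>i. big (s i)"
  shows "big (convergent_cf s m)"
  unfolding convergent_cf_def by (rule cf_big') (use assms in \<open>auto simp del: upt_Suc\<close>)

lemma k_bound: "int k \<le> 2 * int (2 ^ (2 * Suc k) - 2) + 3"
proof -
  have "2 * Suc k < 2 ^ (2 * Suc k)" by (rule less_exp)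
  hence "k + 2 \<le> (2::nat) ^ (2 * Suc k)" by simp
  hence "int k \<le> int (2 ^ (2 * Suc k) - 2)" by linarith
  thus ?thesis by linarith
qed

theorem mainTheorem4:
  fixes a b c :: "bit poly" and eps :: "nat \<Rightarrow> bit poly" and \<beta> :: "bit fls"
  assumes "degree a \<ge> 1" and "degree b \<ge> 1" and "degree c \<ge> 1"
    and "eps 0 = a"
    and "\<And>m. eps (2 * m + 1) = b"
    and "\<And>m. eps (2 * m + 2) = c"
    and "\<beta> = inverse (CF (\<lambda>i. emb (sword eps i)))"
  shows "convergent_cf (\<lambda>i. emb (sword eps i)) \<longlonglongrightarrow> CF (\<lambda>i. emb (sword eps i))
    \<and> \<beta> ^ 4 = emb (b * c * (b + c)) / emb a + emb (c ^ 2) / emb (a ^ 2)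
                 + emb (b * c * (b + c)) * \<beta> + emb (b * c) * \<beta> ^ 2"
proof -
  define s where "s = (\<lambda>i. emb (sword eps i))"
  have bigE: "\<forall>k. big (emb (eps k))"
  proof
    fix k
    show "big (emb (eps k))"
      using eps_cases[of eps a b c k, OF assms(4-6)] big_emb assms(1-3) by metis
  qed
  have bigs: "\<forall>i. big (s i)"
  proof
    fix i
    obtain k where "sword eps i = eps k" using sword_in[of eps i] by blast
    thus "big (s i)" using bigE by (simp add: s_def)
  qed
  obtain L where L1: "convergent_cf s \<longlonglongrightarrow> L"
    and L2: "\<forall>m. small (2 * int m + 1) (convergent_cf s m - L)"
    using cf_limit[OF bigs] by blast
  have CFL: "CF s = L" unfolding CF_def by (rule limI[OF L1])
  have part1: "convergent_cf s \<longlonglongrightarrow> CF s" using L1 CFL by simp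
  have x0: "convergent_cf s 0 = s 0" by (simp add: convergent_cf_def)
  have bigL: "big L"
  proof -
    have "small 1 (s 0 - L)" using L2 x0 by (metis mult_zero_right of_nat_0 add_0)
    moreover have b0: "big (s 0)" using bigs by blast
    moreover have "s 0 \<noteq> 0" "fls_subdegree (s 0) < 1" using b0 unfolding big_def by auto
    ultimately have "L \<noteq> 0 \<and> fls_subdegree L = fls_subdegree (s 0)" using small_approx by blast
    thus ?thesis using b0 unfolding big_def by auto
  qed
  have beta: "\<beta> = inverse L" using assms(7) CFL s_def by simp
  have xW: "convergent_cf s (2 ^ n - 2) = pp eps n / qq eps n" if n: "n \<ge> 1" for n
  proof -
    have p2: "(2::nat) \<le> 2 ^ n" using n by (metis power_increasing power_one_right one_le_numeral)
    have len: "length (W eps n) = Suc (2 ^ n - 2)" using p2 by (simp add: length_W)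
    have lst: "map s [0..<Suc (2 ^ n - 2)] = map emb (W eps n)"
    proof (rule nth_equalityI)
      show "length (map s [0..<Suc (2 ^ n - 2)]) = length (map emb (W eps n))"
        using len by (simp del: upt_Suc)
    next
      fix i assume "i < length (map s [0..<Suc (2 ^ n - 2)])"
      hence i: "i < length (W eps n)" using len by (simp del: upt_Suc)
      hence i': "i < Suc (2 ^ n - 2)" using len by simp
      have "map s [0..<Suc (2 ^ n - 2)] ! i = s i" using i' by (simp del: upt_Suc)
      also have "\<dots> = emb (W eps n ! i)" using sword_W[OF i] by (simp add: s_def)
      also have "\<dots> = map emb (W eps n) ! i" using i by simp
      finally show "map s [0..<Suc (2 ^ n - 2)] ! i = map emb (W eps n) ! i" .
    qed
    have ne: "map emb (W eps n) \<noteq> []" using len by auto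
    have allb: "\<forall>x\<in>set (map emb (W eps n)). big x" using set_W[of eps n] bigE by auto
    have "convergent_cf s (2 ^ n - 2) = cf_fin (map emb (W eps n))"
      unfolding convergent_cf_def lst ..
    also have "\<dots> = pp eps n / qq eps n"
      using cf_mm[OF ne allb] mm_W[of eps n] by simp
    finally show ?thesis .
  qed
  have un: "small (2 * int (2 ^ n - 2) + 3) (\<beta> - qq eps n / pp eps n)" if n: "n \<ge> 1" for n
  proof -
    define N :: nat where "N = 2 ^ n - 2"
    define x where "x = convergent_cf s N"
    have bx: "big x" unfolding x_def by (rule big_convergent[OF bigs])
    have ix: "inverse x = qq eps n / pp eps n" using xW[OF n] by (simp add: x_def N_def)
    have "small (2 * int N + 1) (L - x)"
      using small_uminus[OF L2[rule_format, of N]] by (simp add: x_def)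
    from inverse_diff_small[OF bigL bx this]
    have "small (2 * int N + 1 + 2) (inverse L - inverse x)" .
    thus ?thesis using beta ix by (simp add: N_def add.assoc)
  qed
  define a' where "a' = emb a"
  define b' where "b' = emb b"
  define c' where "c' = emb c"
  define ia where "ia = inverse a'"
  define ic where "ic = inverse c'"
  define C1 where "C1 = b'*c'*(b'+c')"
  define B where "B = b'*c'"
  define c2 where "c2 = c'^2"
  define D where "D = (\<lambda>x::bit fls. x^4 - (C1*ia + c2*ia^2 + C1*x + B*x^2))"
  define M where "M = \<bar>fls_subdegree C1\<bar> + \<bar>fls_subdegree B\<bar> + \<bar>fls_subdegree c2\<bar>"
  have cnz: "c' \<noteq> 0"
  proof -
    have "big (emb (eps (2*0+2)))" using bigE by blast
    thus ?thesis unfolding assms(6) c'_def big_def by blast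
  qed
  have hc: "c' * ic = 1" using cnz by (simp add: ic_def)
  have Dsmall: "small (int k - M) (D \<beta>)" for k
  proof -
    define n where "n = 2 * Suc k"
    define u where "u = qq eps n / pp eps n"
    define dl where "dl = inverse (pp eps (2*k+3))"
    define d where "d = \<beta> - u"
    have uOE: "u = Osum eps (Suc k) + Esum eps (Suc k)"
      unfolding u_def n_def by (rule u_even[OF bigE])
    have Du: "D u = C1*dl + c2*dl^2"
      unfolding D_def uOE C1_def c2_def B_def dl_def
      by (rule final_alg[OF hc E_rel[OF bigE assms(5), folded b'_def]
            O_rel[OF bigE assms(4-6), folded a'_def c'_def ia_def ic_def]])
    have un': "small (2 * int (2 ^ (2 * Suc k) - 2) + 3) d"
      unfolding d_def u_def n_def by (rule un) simp
    have sd: "small (int k) d" by (rule small_mono[OF k_bound un'])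
    have sdl: "small (int k) dl"
    proof -
      have "fls_subdegree (pp eps (2*k+3)) \<le> - int (2*k+3)" using pp_big[OF bigE] by blast
      hence "int k \<le> - fls_subdegree (pp eps (2*k+3))" by linarith
      thus ?thesis unfolding dl_def by (rule small_mono[OF _ small_inverse])
    qed
    have k0: "0 \<le> int k" by simp
    have Dbeta: "D \<beta> = D u + d^4 - C1*d - B*d^2"
    proof -
      have "\<beta> = u + d" by (simp add: d_def)
      hence "D \<beta> = D (u + d)" by simp
      also have "\<dots> = D u + d^4 - C1*d - B*d^2" unfolding D_def by (rule Dshift)
      finally show ?thesis .
    qed
    have m1: "small (fls_subdegree C1 + int k) (C1*dl)" by (rule small_mult[OF small_sd sdl])
    have m2: "small (fls_subdegree c2 + (int k + int k)) (c2*(dl*dl))"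
      by (rule small_mult[OF small_sd small_mult[OF sdl sdl]])
    have m3: "small (int k + int k + (int k + int k)) ((d*d)*(d*d))"
      by (rule small_mult[OF small_mult[OF sd sd] small_mult[OF sd sd]])
    have m4: "small (fls_subdegree C1 + int k) (C1*d)" by (rule small_mult[OF small_sd sd])
    have m5: "small (fls_subdegree B + (int k + int k)) (B*(d*d))"
      by (rule small_mult[OF small_sd small_mult[OF sd sd]])
    have K: "int k - M \<le> fls_subdegree C1 + int k" "int k - M \<le> fls_subdegree c2 + (int k + int k)"
      "int k - M \<le> int k + int k + (int k + int k)" "int k - M \<le> fls_subdegree B + (int k + int k)"
      unfolding M_def by linarith+
    have "small (int k - M) (C1*dl + c2*(dl*dl) + (d*d)*(d*d) - C1*d - B*(d*d))"
      by (intro small_add small_diff small_mono[OF K(1) m1] small_mono[OF K(2) m2]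
          small_mono[OF K(3) m3] small_mono[OF K(1) m4] small_mono[OF K(4) m5])
    moreover have "D \<beta> = C1*dl + c2*(dl*dl) + (d*d)*(d*d) - C1*d - B*(d*d)"
      unfolding Dbeta Du by algebra
    ultimately show ?thesis by (simp only:)
  qed
  have "D \<beta> = 0"
  proof (rule small_all)
    fix K
    show "small K (D \<beta>)"
      by (rule small_mono[OF _ Dsmall[of "nat (K + M)"]]) linarith
  qed
  hence "\<beta>^4 - (C1*ia + c2*ia^2 + C1*\<beta> + B*\<beta>^2) = 0" by (simp only: D_def)
  hence b4: "\<beta>^4 = C1*ia + c2*ia^2 + C1*\<beta> + B*\<beta>^2" by (simp only: right_minus_eq)
  have e1: "emb (b * c * (b + c)) = C1" by (simp only: C1_def emb_mult emb_add b'_def c'_def)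
  have e2: "emb (b * c) = B" by (simp only: B_def emb_mult b'_def c'_def)
  have e3: "emb (c ^ 2) / emb (a ^ 2) = c2 * ia^2"
  proof -
    have "emb (c ^ 2) / emb (a ^ 2) = c' ^ 2 * inverse (a' ^ 2)"
      by (simp only: emb_power a'_def c'_def divide_inverse)
    also have "\<dots> = c2 * ia^2" by (simp only: c2_def ia_def power_inverse)
    finally show ?thesis .
  qed
  have e4: "C1 / emb a = C1 * ia" by (simp only: ia_def a'_def divide_inverse)
  have part2: "\<beta> ^ 4 = emb (b * c * (b + c)) / emb a + emb (c ^ 2) / emb (a ^ 2)
                 + emb (b * c * (b + c)) * \<beta> + emb (b * c) * \<beta> ^ 2"
    unfolding e1 e4 e2 e3 by (rule b4)
  have part1': "convergent_cf (\<lambda>i. emb (sword eps i)) \<longlonglongrightarrow> CF (\<lambda>i. emb (sword eps i))"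
    using part1 by (simp only: s_def)
  show ?thesis using part1' part2 by (rule conjI)
qed



end
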